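(* Let $r_0,r_1,r_2\ge 1$ and $L=\mathfrak{g}(r_0,r_1,r_2)$. If $r_1\ge r_0$ or $r_1\ge r_2$, then $b(L)=r_0r_2$.
   Context: All Lie algebras are over an algebraically closed field $\mathbf{k}$ of characteristic zero. $\mathcal{P}(r_0,r_1,r_2)$ is the poset on $\{b_1,\dots,b_{r_0},m_1,\dots,m_{r_1},t_1,\dots,t_{r_2}\}$ whose strict relations are exactly $b_i\prec m_j$, $m_j\prec t_k$ and $b_i\prec t_k$ for all $i,j,k$ (i.e. $b_1,\dots,b_{r_0}\prec m_1,\dots,m_{r_1}\prec t_1,\dots,t_{r_2}$). $\mathfrak{g}(r_0,r_1,r_2)$ denotes the nilpotent Lie poset algebra $\mathfrak{g}^{\prec}(\mathcal{P}(r_0,r_1,r_2))$: the Lie algebra under the commutator bracket spanned by matrix units $E_{p,q}$ (rows/columns indexed by the poset) with $p\prec q$. The breadth of a Lie algebra $L$ is $b(L)=\max_{x\in L}\operatorname{rank}(\mathrm{ad}_x)$, where $\mathrm{ad}_x=[x,-]$. *)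

theory Defs
  imports "HOL-Computational_Algebra.Polynomial" "HOL-Library.Function_Algebras"
begin

type_synonym ('p, 'k) pmat = "'p \<Rightarrow> 'p \<Rightarrow> 'k"

definition mscale :: "'k::field \<Rightarrow> ('p, 'k) pmat \<Rightarrow> ('p, 'k) pmat" where
  "mscale c X = (\<lambda>p q. c * X p q)"

definition mmult :: "'p set \<Rightarrow> ('p, 'k::field) pmat \<Rightarrow> ('p, 'k) pmat \<Rightarrow> ('p, 'k) pmat" where
  "mmult P X Y = (\<lambda>p q. \<Sum>s\<in>P. X p s * Y s q)"

definition commutator :: "'p set \<Rightarrow> ('p, 'k::field) pmat \<Rightarrow> ('p, 'k) pmat \<Rightarrow> ('p, 'k) pmat" where
  "commutator P X Y = (\<lambda>p q. mmult P X Y p q - mmult P Y X p q)"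

text \<open>The nilpotent Lie poset algebra of a poset (P, prec) (prec the strict order):
  the span of the matrix units E_{p,q} with p prec q, i.e. all matrices supported on
  strict relations.\<close>
definition lie_poset_alg :: "'p set \<Rightarrow> ('p \<Rightarrow> 'p \<Rightarrow> bool) \<Rightarrow> ('p, 'k::field) pmat set" where
  "lie_poset_alg P prec = {X. \<forall>p q. X p q \<noteq> 0 \<longrightarrow> p \<in> P \<and> q \<in> P \<and> prec p q}"

definition ad :: "'p set \<Rightarrow> ('p, 'k::field) pmat \<Rightarrow> ('p, 'k) pmat \<Rightarrow> ('p, 'k) pmat" where
  "ad P X = commutator P X"

definition ad_rank :: "'p set \<Rightarrow> ('p, 'k::field) pmat set \<Rightarrow> ('p, 'k) pmat \<Rightarrow> nat" where
  "ad_rank P L X = vector_space.dim mscale (ad P X ` L)"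

definition breadth :: "'p set \<Rightarrow> ('p, 'k::field) pmat set \<Rightarrow> nat" where
  "breadth P L = Max {ad_rank P L X | X. X \<in> L}"

text \<open>The poset P(r0,r1,r2): elements (l,i) with level l \<in> {0,1,2} and i < r_l
  ((0,i) = b_(i+1), (1,j) = m_(j+1), (2,k) = t_(k+1)); (l,i) \<prec> (l',j) iff l < l'.\<close>
definition P3 :: "nat \<Rightarrow> nat \<Rightarrow> nat \<Rightarrow> (nat \<times> nat) set" where
  "P3 r0 r1 r2 = {(l, i). (l = 0 \<and> i < r0) \<or> (l = 1 \<and> i < r1) \<or> (l = 2 \<and> i < r2)}"

definition prec3 :: "nat \<times> nat \<Rightarrow> nat \<times> nat \<Rightarrow> bool" where
  "prec3 x y = (fst x < fst y)"

definition g3 :: "nat \<Rightarrow> nat \<Rightarrow> nat \<Rightarrow> (nat \<times> nat, 'k::field) pmat set" where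
  "g3 r0 r1 r2 = lie_poset_alg (P3 r0 r1 r2) prec3"

end

theory Submission
  imports Defs
begin

interpretation V: vector_space "mscale :: 'k::field \<Rightarrow> ('p,'k) pmat \<Rightarrow> ('p,'k) pmat"
  by unfold_locales (auto simp: mscale_def fun_eq_iff algebra_simps)

lemma sum_app2: "(\<Sum>v\<in>S. (f v :: ('p,'k::field) pmat)) p q = (\<Sum>v\<in>S. f v p q)"
  by (induction S rule: infinite_finite_induct) auto

definition EE :: "nat \<Rightarrow> nat \<Rightarrow> (nat \<times> nat, 'k::field) pmat" where
  "EE i k = (\<lambda>p q. if p = (0,i) \<and> q = (2,k) then 1 else 0)"

definition BB :: "nat \<Rightarrow> nat \<Rightarrow> (nat \<times> nat, 'k::field) pmat set" where
  "BB r0 r2 = (\<lambda>(i,k). EE i k) ` ({..<r0} \<times> {..<r2})"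

lemma EE_inj: "(EE i k :: (nat \<times> nat, 'k::field) pmat) = EE i' k' \<longleftrightarrow> i = i' \<and> k = k'"
proof
  assume "(EE i k :: (nat \<times> nat, 'k::field) pmat) = EE i' k'"
  then have "(EE i k :: (nat \<times> nat, 'k::field) pmat) (0,i) (2,k) = EE i' k' (0,i) (2,k)" by simp
  then show "i = i' \<and> k = k'" by (auto simp: EE_def split: if_splits)
qed auto

lemma card_BB: "card (BB r0 r2 :: (nat \<times> nat, 'k::field) pmat set) = r0 * r2"
proof -
  have "inj_on (\<lambda>(i,k). EE i k :: (nat \<times> nat, 'k::field) pmat) ({..<r0} \<times> {..<r2})"
    by (auto simp: inj_on_def EE_inj)
  then show ?thesis unfolding BB_def by (simp add: card_image card_cartesian_product)
qed

lemma finite_BB: "finite (BB r0 r2)"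
  unfolding BB_def by simp

lemma indep_BB: "V.independent (BB r0 r2 :: (nat \<times> nat, 'k::field) pmat set)"
  unfolding V.independent_explicit_finite_subsets
proof (intro allI impI ballI)
  fix S :: "(nat \<times> nat, 'k) pmat set" and u v
  assume S: "S \<subseteq> BB r0 r2" "finite S" and z: "(\<Sum>v\<in>S. mscale (u v) v) = 0" and v: "v \<in> S"
  then obtain i k where vik: "v = EE i k" unfolding BB_def by auto
  have "(\<Sum>v\<in>S. mscale (u v) v) (0,i) (2,k) = 0" using z by simp
  then have "(\<Sum>w\<in>S. u w * w (0,i) (2,k)) = 0" by (simp add: sum_app2 mscale_def)
  moreover have "(\<Sum>w\<in>S. u w * w (0,i) (2,k)) = (\<Sum>w\<in>S. if w = v then u w else 0)"
  proof (rule sum.cong[OF refl])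
    fix w assume "w \<in> S"
    then obtain i' k' where w: "w = EE i' k'" using S unfolding BB_def by auto
    show "u w * w (0,i) (2,k) = (if w = v then u w else 0)"
    proof (cases "w = v")
      case True then show ?thesis using vik by (simp add: EE_def)
    next
      case False then have "\<not> (i' = i \<and> k' = k)" using w vik by auto
      then show ?thesis using False w by (auto simp: EE_def)
    qed
  qed
  ultimately show "u v = 0" using S v by simp
qed

lemma support_span:
  fixes Z :: "(nat \<times> nat, 'k::field) pmat"
  assumes "\<And>p q. Z p q \<noteq> 0 \<Longrightarrow> \<exists>i k. i < r0 \<and> k < r2 \<and> p = (0,i) \<and> q = (2,k)"
  shows "Z \<in> V.span (BB r0 r2)"
proof -
  have eq: "Z = (\<Sum>ik\<in>{..<r0} \<times> {..<r2}. mscale (Z (0, fst ik) (2, snd ik)) (EE (fst ik) (snd ik)))"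
  proof (intro ext)
    fix p q :: "nat \<times> nat"
    obtain a b c d where pq: "p = (a,b)" "q = (c,d)" by (cases p, cases q)
    have "(\<Sum>ik\<in>{..<r0} \<times> {..<r2}. mscale (Z (0, fst ik) (2, snd ik)) (EE (fst ik) (snd ik))) p q
       = (\<Sum>ik\<in>{..<r0} \<times> {..<r2}. if ik = (b, d) \<and> a = 0 \<and> c = 2 then Z p q else 0)"
      unfolding pq by (auto simp: sum_app2 mscale_def EE_def intro!: sum.cong)
    also have "\<dots> = Z p q"
      using assms[of p q] unfolding pq
      apply (cases "a = 0 \<and> c = 2")
       apply (auto simp: sum.delta[of _ "(b,d)"] cong: if_cong)
       apply (metis)+
      done
    finally show "Z p q = (\<Sum>ik\<in>{..<r0} \<times> {..<r2}. mscale (Z (0, fst ik) (2, snd ik)) (EE (fst ik) (snd ik))) p q" by simp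
  qed
  show ?thesis
    by (subst eq, intro V.span_sum V.span_scale V.span_base) (auto simp: BB_def)
qed

lemma mem_g3: "X \<in> g3 r0 r1 r2 \<longleftrightarrow>
   (\<forall>p q. X p q \<noteq> 0 \<longrightarrow> p \<in> P3 r0 r1 r2 \<and> q \<in> P3 r0 r1 r2 \<and> fst p < fst q)"
  by (simp add: g3_def lie_poset_alg_def prec3_def)

lemma prod_nz:
  assumes "X \<in> g3 r0 r1 r2" "Y \<in> g3 r0 r1 r2" "X p s * Y s q \<noteq> 0"
  shows "\<exists>i k. i < r0 \<and> k < r2 \<and> p = (0,i) \<and> q = (2,k)"
proof -
  have "X p s \<noteq> 0" "Y s q \<noteq> 0" using assms(3) by auto
  then have "p \<in> P3 r0 r1 r2" "q \<in> P3 r0 r1 r2" "s \<in> P3 r0 r1 r2" "fst p < fst s" "fst s < fst q"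
    using assms(1,2) unfolding mem_g3 by blast+
  then show ?thesis unfolding P3_def by (cases p, cases q, cases s) auto
qed

lemma comm_support:
  fixes X Y :: "(nat \<times> nat, 'k::field) pmat"
  assumes "X \<in> g3 r0 r1 r2" "Y \<in> g3 r0 r1 r2" "commutator (P3 r0 r1 r2) X Y p q \<noteq> 0"
  shows "\<exists>i k. i < r0 \<and> k < r2 \<and> p = (0,i) \<and> q = (2,k)"
proof -
  have "(\<Sum>s\<in>P3 r0 r1 r2. X p s * Y s q) \<noteq> 0 \<or> (\<Sum>s\<in>P3 r0 r1 r2. Y p s * X s q) \<noteq> 0"
    using assms(3) by (auto simp: commutator_def mmult_def)
  then obtain s where "X p s * Y s q \<noteq> 0 \<or> Y p s * X s q \<noteq> 0"
    by (metis (mono_tags, lifting) sum.neutral)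
  then show ?thesis using prod_nz assms(1,2) by metis
qed

lemma upper:
  fixes X :: "(nat \<times> nat, 'k::field) pmat"
  assumes "X \<in> g3 r0 r1 r2"
  shows "ad_rank (P3 r0 r1 r2) (g3 r0 r1 r2) X \<le> r0 * r2"
proof -
  have "ad (P3 r0 r1 r2) X ` g3 r0 r1 r2 \<subseteq> V.span (BB r0 r2)"
    using comm_support[OF assms] by (auto simp: ad_def intro!: support_span)
  then have "V.dim (ad (P3 r0 r1 r2) X ` g3 r0 r1 r2) \<le> card (BB r0 r2 :: (nat \<times> nat, 'k) pmat set)"
    by (intro V.dim_le_card finite_BB)
  then show ?thesis by (simp add: ad_rank_def card_BB)
qed

lemma finite_P3: "finite (P3 r0 r1 r2)"
proof -
  have "P3 r0 r1 r2 \<subseteq> {..2} \<times> {..<r0+r1+r2}" by (auto simp: P3_def)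
  then show ?thesis by (rule finite_subset) simp
qed

definition XA :: "nat \<Rightarrow> (nat \<times> nat, 'k::field) pmat" where
  "XA r0 = (\<lambda>p q. if fst p = 0 \<and> fst q = 1 \<and> snd p = snd q \<and> snd p < r0 then 1 else 0)"

definition XB :: "nat \<Rightarrow> (nat \<times> nat, 'k::field) pmat" where
  "XB r2 = (\<lambda>p q. if fst p = 1 \<and> fst q = 2 \<and> snd p = snd q \<and> snd q < r2 then 1 else 0)"

lemma XA_mem: "r0 \<le> r1 \<Longrightarrow> XA r0 \<in> g3 r0 r1 r2"
  by (auto simp: mem_g3 XA_def P3_def split: if_splits)

lemma XB_mem: "r2 \<le> r1 \<Longrightarrow> XB r2 \<in> g3 r0 r1 r2"
  by (auto simp: mem_g3 XB_def P3_def split: if_splits)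

lemma XA_good:
  assumes "r0 \<le> r1" "i < r0" "k < r2"
  shows "(EE i k :: (nat \<times> nat, 'k::field) pmat) \<in> ad (P3 r0 r1 r2) (XA r0) ` g3 r0 r1 r2"
proof -
  define Y :: "(nat \<times> nat, 'k) pmat" where "Y = (\<lambda>p q. if p = (1,i) \<and> q = (2,k) then 1 else 0)"
  have Y: "Y \<in> g3 r0 r1 r2" using assms by (auto simp: mem_g3 Y_def P3_def split: if_splits)
  have iP: "(1,i) \<in> P3 r0 r1 r2" using assms by (simp add: P3_def)
  have "commutator (P3 r0 r1 r2) (XA r0) Y = EE i k"
  proof (intro ext)
    fix p q :: "nat \<times> nat"
    have 1: "mmult (P3 r0 r1 r2) (XA r0) Y p q = EE i k p q"
    proof -
      have "mmult (P3 r0 r1 r2) (XA r0) Y p q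
          = (\<Sum>s\<in>P3 r0 r1 r2. if s = (1,i) then XA r0 p (1,i) * (if q = (2,k) then 1 else 0) else 0)"
        unfolding mmult_def Y_def by (rule sum.cong) auto
      also have "\<dots> = XA r0 p (1,i) * (if q = (2,k) then 1 else 0)"
        using iP finite_P3 by (simp add: sum.delta)
      also have "\<dots> = EE i k p q" using assms by (cases p) (auto simp: XA_def EE_def)
      finally show ?thesis .
    qed
    have 2: "mmult (P3 r0 r1 r2) Y (XA r0) p q = 0"
      unfolding mmult_def Y_def by (rule sum.neutral) (auto simp: XA_def)
    show "commutator (P3 r0 r1 r2) (XA r0) Y p q = EE i k p q"
      using 1 2 by (simp add: commutator_def)
  qed
  then show ?thesis using Y unfolding ad_def by force
qed

lemma XB_good:
  assumes "r2 \<le> r1" "i < r0" "k < r2"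
  shows "(EE i k :: (nat \<times> nat, 'k::field) pmat) \<in> ad (P3 r0 r1 r2) (XB r2) ` g3 r0 r1 r2"
proof -
  define Y :: "(nat \<times> nat, 'k) pmat" where "Y = (\<lambda>p q. if p = (0,i) \<and> q = (1,k) then -1 else 0)"
  have Y: "Y \<in> g3 r0 r1 r2" using assms by (auto simp: mem_g3 Y_def P3_def split: if_splits)
  have kP: "(1,k) \<in> P3 r0 r1 r2" using assms by (simp add: P3_def)
  have "commutator (P3 r0 r1 r2) (XB r2) Y = EE i k"
  proof (intro ext)
    fix p q :: "nat \<times> nat"
    have 1: "mmult (P3 r0 r1 r2) Y (XB r2) p q = - EE i k p q"
    proof -
      have "mmult (P3 r0 r1 r2) Y (XB r2) p q
          = (\<Sum>s\<in>P3 r0 r1 r2. if s = (1,k) then (if p = (0,i) then -1 else 0) * XB r2 (1,k) q else 0)"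
        unfolding mmult_def Y_def by (rule sum.cong) auto
      also have "\<dots> = (if p = (0,i) then -1 else 0) * XB r2 (1,k) q"
        using kP finite_P3 by (simp add: sum.delta)
      also have "\<dots> = - EE i k p q" using assms by (cases q) (auto simp: XB_def EE_def)
      finally show ?thesis .
    qed
    have 2: "mmult (P3 r0 r1 r2) (XB r2) Y p q = 0"
      unfolding mmult_def Y_def by (rule sum.neutral) (auto simp: XB_def)
    show "commutator (P3 r0 r1 r2) (XB r2) Y p q = EE i k p q"
      using 1 2 by (simp add: commutator_def)
  qed
  then show ?thesis using Y unfolding ad_def by force
qed

lemma exact:
  fixes X :: "(nat \<times> nat, 'k::field) pmat"
  assumes "X \<in> g3 r0 r1 r2"
    and "BB r0 r2 \<subseteq> ad (P3 r0 r1 r2) X ` g3 r0 r1 r2"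
  shows "ad_rank (P3 r0 r1 r2) (g3 r0 r1 r2) X = r0 * r2"
proof -
  have "ad (P3 r0 r1 r2) X ` g3 r0 r1 r2 \<subseteq> V.span (BB r0 r2)"
    using comm_support[OF assms(1)] by (auto simp: ad_def intro!: support_span)
  then show ?thesis unfolding ad_rank_def
    by (intro V.dim_unique[OF assms(2)] indep_BB card_BB)
qed

theorem theorem3:
  fixes r0 r1 r2 :: nat
  assumes "r0 \<ge> 1" and "r1 \<ge> 1" and "r2 \<ge> 1"
    and "r1 \<ge> r0 \<or> r1 \<ge> r2"
  shows "breadth (P3 r0 r1 r2) (g3 r0 r1 r2 :: (nat \<times> nat, 'k::{alg_closed_field, field_char_0}) pmat set)
         = r0 * r2"
proof -
  let ?S = "{ad_rank (P3 r0 r1 r2) (g3 r0 r1 r2) X | X :: (nat \<times> nat, 'k) pmat. X \<in> g3 r0 r1 r2}"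
  obtain X :: "(nat \<times> nat, 'k) pmat" where X: "X \<in> g3 r0 r1 r2" "BB r0 r2 \<subseteq> ad (P3 r0 r1 r2) X ` g3 r0 r1 r2"
  proof (cases "r1 \<ge> r0")
    case True
    show ?thesis
      by (rule that[OF XA_mem[OF True]]) (auto simp: BB_def intro: XA_good[OF True])
  next
    case False
    then have "r1 \<ge> r2" using assms(4) by simp
    show ?thesis
      by (rule that[OF XB_mem[OF \<open>r1 \<ge> r2\<close>]]) (auto simp: BB_def intro: XB_good[OF \<open>r1 \<ge> r2\<close>])
  qed
  have sub: "?S \<subseteq> {..r0*r2}" using upper by fastforce
  have "Max ?S = r0 * r2"
  proof (rule Max_eqI)
    show "finite ?S" using sub by (rule finite_subset) simp
    show "y \<le> r0 * r2" if "y \<in> ?S" for y using that sub by auto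
    show "r0 * r2 \<in> ?S" using exact[OF X] X(1) by force
  qed
  then show ?thesis unfolding breadth_def .
qed

end
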